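(* For every infinite word $w\in A_q^{\omega}$, the image $\mathcal{D}_{p/q}(w)$ exists and is unique.
   Context: Let $p>q>1$ be coprime integers, $A_q=\{0,1,\dots,q-1\}$ and $B=\{p-(2q-1),\dots,p-1\}$. For $n\in\mathbb{N}$ and $a\in\mathbb{Z}$, let $\tau(n,a)=\frac{np+a}{q}$, defined only when $q$ divides $np+a$. For $a\in B$ let $\omega(a)=\{(b,c)\in A_q\times A_q : c-b=a-(p-q)\}$. The transducer $\mathcal{D}_{p/q}$ has state set $\mathbb{N}$, input and output alphabet $A_q$, initial state $0$, and has a transition $n\xrightarrow{b|c}\tau(n,a)$ for every $n\in\mathbb{N}$, every $a\in B$ with $\tau(n,a)$ defined, and every $(b,c)\in\omega(a)$; no other transitions. For a finite word $u$, its image $\mathcal{D}_{p/q}(u)$ is the word $v$ (if it exists) such that there is a path from state $0$ reading input $u$ and producing output $v$. The image of an infinite word $w$ is an infinite word $w'$ such that for every finite prefix $u$ of $w$, $\mathcal{D}_{p/q}(u)$ exists and is a prefix of $w'$. *)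

theory Defs
  imports Main
begin

definition digitsA :: "nat \<Rightarrow> nat set" where
  "digitsA q = {0..<q}"

definition setB :: "nat \<Rightarrow> nat \<Rightarrow> int set" where
  "setB p q = {int p - (2 * int q - 1) .. int p - 1}"

definition tau_defined :: "nat \<Rightarrow> nat \<Rightarrow> nat \<Rightarrow> int \<Rightarrow> bool" where
  "tau_defined p q n a \<longleftrightarrow> int q dvd (int n * int p + a)"

definition tau :: "nat \<Rightarrow> nat \<Rightarrow> nat \<Rightarrow> int \<Rightarrow> int" where
  "tau p q n a = (int n * int p + a) div int q"

definition omega :: "nat \<Rightarrow> nat \<Rightarrow> int \<Rightarrow> (nat \<times> nat) set" where
  "omega p q a = {(b, c). b \<in> digitsA q \<and> c \<in> digitsA q \<and>
                          int c - int b = a - (int p - int q)}"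

(* transition n --b|c--> m of D_{p/q}; the target must be a state, i.e. in \<nat> *)
definition Dtrans :: "nat \<Rightarrow> nat \<Rightarrow> nat \<Rightarrow> nat \<Rightarrow> nat \<Rightarrow> nat \<Rightarrow> bool" where
  "Dtrans p q n b c m \<longleftrightarrow>
     (\<exists>a \<in> setB p q. tau_defined p q n a \<and> (b, c) \<in> omega p q a \<and> int m = tau p q n a)"

inductive Dpath :: "nat \<Rightarrow> nat \<Rightarrow> nat \<Rightarrow> nat list \<Rightarrow> nat list \<Rightarrow> nat \<Rightarrow> bool"
  for p q where
  Dpath_Nil: "Dpath p q n [] [] n"
| Dpath_Cons: "Dtrans p q n b c n' \<Longrightarrow> Dpath p q n' u v m \<Longrightarrow> Dpath p q n (b # u) (c # v) m"

definition fin_image :: "nat \<Rightarrow> nat \<Rightarrow> nat list \<Rightarrow> nat list \<Rightarrow> bool" where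
  "fin_image p q u v \<longleftrightarrow> (\<exists>m. Dpath p q 0 u v m)"

(* infinite words are functions nat => nat; prefix of length k of w is map w [0..<k] *)
definition is_prefix_of_inf :: "nat list \<Rightarrow> (nat \<Rightarrow> nat) \<Rightarrow> bool" where
  "is_prefix_of_inf v w' \<longleftrightarrow> (\<forall>i < length v. v ! i = w' i)"

definition inf_image :: "nat \<Rightarrow> nat \<Rightarrow> (nat \<Rightarrow> nat) \<Rightarrow> (nat \<Rightarrow> nat) \<Rightarrow> bool" where
  "inf_image p q w w' \<longleftrightarrow>
     (\<forall>k. \<exists>v. fin_image p q (map w [0..<k]) v \<and> is_prefix_of_inf v w')"

end

theory Submission
  imports Defs
begin

lemma trans_unique:
  assumes "q > 1" "Dtrans p q n b c m" "Dtrans p q n b c' m'"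
  shows "c = c' \<and> m = m'"
proof -
  from assms(2) obtain a where a: "a \<in> setB p q" "tau_defined p q n a" "(b, c) \<in> omega p q a"
     "int m = tau p q n a" unfolding Dtrans_def by blast
  from assms(3) obtain a' where a': "a' \<in> setB p q" "tau_defined p q n a'" "(b, c') \<in> omega p q a'"
     "int m' = tau p q n a'" unfolding Dtrans_def by blast
  have c: "int c - int b = a - (int p - int q)" "c < q" using a(3) by (auto simp: omega_def digitsA_def)
  have c': "int c' - int b = a' - (int p - int q)" "c' < q" using a'(3) by (auto simp: omega_def digitsA_def)
  have "int q dvd (int n * int p + a) - (int n * int p + a')"
    using a(2) a'(2) unfolding tau_defined_def by (rule dvd_diff)
  moreover have "(int n * int p + a) - (int n * int p + a') = int c - int c'" using c c' by simp
  ultimately have d: "int q dvd (int c - int c')" by simp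
  have "\<bar>int c - int c'\<bar> < int q" using c c' by auto
  hence "int c - int c' = 0" using d dvd_imp_le_int[of "int c - int c'" "int q"]
    by fastforce
  hence "c = c'" by simp
  hence "a = a'" using c c' by simp
  thus ?thesis using a(4) a'(4) \<open>c = c'\<close> by simp
qed

lemma trans_exists:
  assumes "p > q" "q > 1" "b < q"
  shows "\<exists>c m. Dtrans p q n b c m"
proof -
  define d0 where "d0 = (- (int n + 1) * int p) mod int q"
  have d0: "0 \<le> d0" "d0 < int q" using assms by (auto simp: d0_def)
  have cong: "int q dvd (int n * int p + d0 + int p)"
  proof -
    have "(int n * int p + d0 + int p) mod int q = ((int n + 1) * int p + (- (int n + 1) * int p) mod int q) mod int q"
      by (simp add: d0_def algebra_simps)
    also have "\<dots> = ((int n + 1) * int p + (- (int n + 1) * int p)) mod int q"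
      by (metis mod_add_right_eq)
    also have "\<dots> = 0" by (simp add: algebra_simps)
    finally show ?thesis by (simp add: dvd_eq_mod_eq_0)
  qed
  obtain a c where ac: "a \<in> setB p q" "int q dvd (int n * int p + a)" "c < q"
     "int c - int b = a - (int p - int q)"
  proof (cases "int b + d0 < int q")
    case True
    show ?thesis
    proof (rule that[of "d0 + int p - int q" "nat (int b + d0)"])
      show "d0 + int p - int q \<in> setB p q" using d0 assms by (auto simp: setB_def)
      show "int q dvd int n * int p + (d0 + int p - int q)"
        using cong by (metis (no_types, lifting) add.assoc add_diff_eq dvd_diff dvd_refl)
    qed (use True d0 in auto)
  next
    case False
    show ?thesis
    proof (rule that[of "d0 + int p - 2 * int q" "nat (int b + d0 - int q)"])
      show "d0 + int p - 2 * int q \<in> setB p q" using d0 assms False by (auto simp: setB_def)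
      have "int q dvd (int n * int p + d0 + int p) - 2 * int q" using cong by simp
      thus "int q dvd int n * int p + (d0 + int p - 2 * int q)" by (simp add: algebra_simps)
    qed (use False d0 assms in auto)
  qed
  have nn: "0 \<le> int n * int p + a"
  proof (rule ccontr)
    assume "\<not> ?thesis"
    hence neg: "int n * int p + a < 0" by simp
    have "a \<ge> int p - (2 * int q - 1)" using ac(1) by (simp add: setB_def)
    moreover have "int n * int p \<ge> 0" by simp
    ultimately have "int n * int p + a > - int q" using assms by linarith
    obtain k where k: "int n * int p + a = int q * k" using ac(2) by blast
    have "k < 0" using neg k assms by (simp add: mult_less_0_iff)
    hence "k \<le> -1" by simp
    hence "int q * k \<le> int q * (-1)" using assms by (intro mult_left_mono) auto
    hence "int q * k \<le> - int q" by simp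
    thus False using k \<open>int n * int p + a > - int q\<close> by simp
  qed
  have "tau p q n a \<ge> 0" using nn assms by (simp add: tau_def pos_imp_zdiv_nonneg_iff)
  hence "int (nat (tau p q n a)) = tau p q n a" by simp
  moreover have "(b, c) \<in> omega p q a" using ac assms by (auto simp: omega_def digitsA_def)
  ultimately have "Dtrans p q n b c (nat (tau p q n a))"
    unfolding Dtrans_def tau_defined_def using ac by blast
  thus ?thesis by blast
qed

lemma Dpath_unique:
  assumes "q > 1" "Dpath p q n u v m"
  shows "Dpath p q n u v' m' \<Longrightarrow> v = v' \<and> m = m'"
  using assms(2)
proof (induction arbitrary: v' m' rule: Dpath.induct)
  case (Dpath_Nil n)
  then show ?case by (cases rule: Dpath.cases) auto
next
  case (Dpath_Cons n b c n' u v m)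
  from Dpath_Cons.prems show ?case
  proof (cases rule: Dpath.cases)
    case (Dpath_Cons c2 n2 v2)
    with trans_unique[OF assms(1) \<open>Dtrans p q n b c n'\<close>] have "c = c2" "n' = n2" by auto
    with Dpath_Cons Dpath_Cons.IH show ?thesis by auto
  qed
qed

lemma Dpath_exists:
  assumes "p > q" "q > 1"
  shows "\<forall>x\<in>set u. x < q \<Longrightarrow> \<exists>v m. Dpath p q n u v m"
proof (induction u arbitrary: n)
  case Nil
  then show ?case using Dpath_Nil by blast
next
  case (Cons b u)
  then obtain c n' where "Dtrans p q n b c n'" using trans_exists[OF assms] by fastforce
  moreover obtain v m where "Dpath p q n' u v m" using Cons.IH Cons.prems by (meson list.set_intros(2))
  ultimately show ?case using Dpath_Cons by blast
qed

lemma Dpath_ConsE: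
  "Dpath p q n (b # u) v m \<Longrightarrow> \<exists>c n' v'. v = c # v' \<and> Dtrans p q n b c n' \<and> Dpath p q n' u v' m"
  by (cases rule: Dpath.cases) auto

lemma Dpath_prefix:
  "Dpath p q n (u1 @ u2) v m \<Longrightarrow> \<exists>m1. Dpath p q n u1 (take (length u1) v) m1"
proof (induction u1 arbitrary: n v)
  case Nil
  then show ?case using Dpath_Nil by auto
next
  case (Cons b u1)
  then obtain c n' v' where h: "v = c # v'" "Dtrans p q n b c n'" "Dpath p q n' (u1 @ u2) v' m"
    using Dpath_ConsE[of p q n b "u1 @ u2" v m] by auto
  with Cons.IH obtain m1 where "Dpath p q n' u1 (take (length u1) v') m1" by blast
  thus ?case using h Dpath.Dpath_Cons by fastforce
qed

lemma Dpath_len: "Dpath p q n u v m \<Longrightarrow> length v = length u"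
  by (induction rule: Dpath.induct) auto

theorem mainTheorem2:
  fixes p q :: nat and w :: "nat \<Rightarrow> nat"
  assumes "p > q" and "q > 1" and "coprime p q"
    and "\<forall>i. w i \<in> digitsA q"
  shows "\<exists>!w'. inf_image p q w w'"
proof -
  have ex: "\<exists>v. fin_image p q (map w [0..<k]) v" for k
  proof -
    have "\<forall>x\<in>set (map w [0..<k]). x < q" using assms(4) by (simp add: digitsA_def)
    from Dpath_exists[OF assms(1,2) this] show ?thesis unfolding fin_image_def by blast
  qed
  have un: "fin_image p q u v \<Longrightarrow> fin_image p q u v' \<Longrightarrow> v = v'" for u v v'
    unfolding fin_image_def using Dpath_unique[OF assms(2)] by blast
  define V where "V k = (THE v. fin_image p q (map w [0..<k]) v)" for k
  have V: "fin_image p q (map w [0..<k]) (V k)" for k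
  proof -
    have "\<exists>!v. fin_image p q (map w [0..<k]) v" using ex[of k] un by blast
    thus ?thesis unfolding V_def by (rule theI')
  qed
  have Veq: "fin_image p q (map w [0..<k]) v \<Longrightarrow> v = V k" for k v using V un by blast
  have pre: "i < k \<Longrightarrow> V k ! i = V (Suc i) ! i" for i k
  proof -
    assume ik: "i < k"
    have split: "map w [0..<k] = map w [0..<Suc i] @ map w [Suc i..<k]"
      using upt_add_eq_append[of 0 "Suc i" "k - Suc i"] ik by simp
    obtain m where "Dpath p q 0 (map w [0..<k]) (V k) m" using V unfolding fin_image_def by blast
    hence "Dpath p q 0 (map w [0..<Suc i] @ map w [Suc i..<k]) (V k) m" by (simp only: split[symmetric])
    from Dpath_prefix[OF this] obtain m1 where "Dpath p q 0 (map w [0..<Suc i]) (take (Suc i) (V k)) m1"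
      by auto
    hence "take (Suc i) (V k) = V (Suc i)" using Veq unfolding fin_image_def by blast
    thus ?thesis by (metis lessI nth_take)
  qed
  show ?thesis
  proof (rule ex1I[of _ "\<lambda>i. V (Suc i) ! i"])
    show "inf_image p q w (\<lambda>i. V (Suc i) ! i)"
      unfolding inf_image_def is_prefix_of_inf_def
    proof
      fix k
      have len: "length (V k) = k"
      proof -
        obtain m where "Dpath p q 0 (map w [0..<k]) (V k) m" using V unfolding fin_image_def by blast
        from Dpath_len[OF this] show ?thesis by simp
      qed
      have "\<forall>i<length (V k). V k ! i = V (Suc i) ! i"
      proof (intro allI impI)
        fix i assume "i < length (V k)"
        hence "i < k" using len by simp
        thus "V k ! i = V (Suc i) ! i" by (rule pre)
      qed
      thus "\<exists>v. fin_image p q (map w [0..<k]) v \<and> (\<forall>i<length v. v ! i = V (Suc i) ! i)"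
        using V[of k] by blast
    qed
  next
    fix w'' assume "inf_image p q w w''"
    show "w'' = (\<lambda>i. V (Suc i) ! i)"
    proof
      fix i
      obtain v where v: "fin_image p q (map w [0..<Suc i]) v" "is_prefix_of_inf v w''"
        using \<open>inf_image p q w w''\<close> unfolding inf_image_def by blast
      have "v = V (Suc i)" using Veq v(1) by blast
      moreover have "length (V (Suc i)) = Suc i"
      proof -
        obtain m where "Dpath p q 0 (map w [0..<Suc i]) (V (Suc i)) m" using V unfolding fin_image_def by blast
        from Dpath_len[OF this] show ?thesis by simp
      qed
      ultimately show "w'' i = V (Suc i) ! i" using v(2) by (auto simp: is_prefix_of_inf_def)
    qed
  qed
qed

end
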